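(* Let $\Sigma$ be an alphabet with $|\Sigma|\ge 3$ and $f\colon\Sigma^*\to\Sigma^*$ RCP. If there are letters $a,b\in\Sigma$ with $a\neq b$ and $f(a)\in b\Sigma^*$, then $f(x)\in b\Sigma^*$ for all $x\in\Sigma^*$.
   Context: $\Sigma^*$ is the free monoid over $\Sigma$ (finite words, concatenation, empty word $\varepsilon$). For a word $w$, $w\Sigma^*$ denotes the set of words having $w$ as a prefix. A function $f\colon(\Sigma^* )^k\to\Sigma^*$ is RCP if for every monoid morphism $\varphi\colon\Sigma^*\to\Sigma^*$ and all $u_1,\ldots,u_k,v_1,\ldots,v_k$ with $\varphi(u_i)=\varphi(v_i)$ for all $i$, we have $\varphi(f(u_1,\ldots,u_k))=\varphi(f(v_1,\ldots,v_k))$. *)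

theory Defs
  imports Main
begin

text \<open>A monoid morphism phi from Sigma* to Sigma* is determined by the images of letters:
phi = concat o map h with h letter images in Sigma*.\<close>

definition morph :: "('a \<Rightarrow> 'a list) \<Rightarrow> 'a list \<Rightarrow> 'a list" where
  "morph h w = concat (map h w)"

definition is_morphism_on :: "'a set \<Rightarrow> ('a \<Rightarrow> 'a list) \<Rightarrow> bool" where
  "is_morphism_on \<Sigma> h \<longleftrightarrow> (\<forall>c\<in>\<Sigma>. h c \<in> lists \<Sigma>)"

definition RCP1 :: "'a set \<Rightarrow> ('a list \<Rightarrow> 'a list) \<Rightarrow> bool" where
  "RCP1 \<Sigma> f \<longleftrightarrow>
     (\<forall>h u v. is_morphism_on \<Sigma> h \<longrightarrow> u \<in> lists \<Sigma> \<longrightarrow> v \<in> lists \<Sigma> \<longrightarrow>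
        morph h u = morph h v \<longrightarrow> morph h (f u) = morph h (f v))"

end

theory Submission
  imports Defs
begin

lemma morph_Cons[simp]: "morph h (z # t) = h z @ morph h t"
  by (simp add: morph_def)

lemma morph_Nil[simp]: "morph h [] = []"
  by (simp add: morph_def)

lemma RCP1_app: "RCP1 \<Sigma> f \<Longrightarrow> is_morphism_on \<Sigma> h \<Longrightarrow> u \<in> lists \<Sigma> \<Longrightarrow> v \<in> lists \<Sigma>
  \<Longrightarrow> morph h u = morph h v \<Longrightarrow> morph h (f u) = morph h (f v)"
  unfolding RCP1_def by blast

lemma morph_id_notin: "p \<notin> set x \<Longrightarrow> morph (\<lambda>z. if z = p then y else [z]) x = x"
  by (induction x) auto

lemma morph_erase: "morph (\<lambda>z. if z = d then [] else [z]) x = filter (\<lambda>z. z \<noteq> d) x"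
  by (induction x) auto

lemma subst_lem:
  assumes R: "RCP1 \<Sigma> f" and p: "p \<in> \<Sigma>" and x: "x \<in> lists \<Sigma>" and px: "p \<notin> set x"
    and bp: "b \<noteq> p" and fp: "f [p] = b # s"
  shows "\<exists>z t. f x = z # t \<and> (z = b \<or> z = p)"
proof -
  define h where "h = (\<lambda>z. if z = p then x else [z])"
  have hm: "is_morphism_on \<Sigma> h" using x unfolding is_morphism_on_def h_def by auto
  have "morph h [p] = morph h x" using px by (simp add: h_def morph_id_notin)
  hence "morph h (f [p]) = morph h (f x)"
    using p x by (intro RCP1_app[OF R hm]) auto
  hence eq: "b # morph h s = morph h (f x)" using fp bp by (simp add: h_def)
  show ?thesis
  proof (cases "f x")
    case Nil then show ?thesis using eq by simp
  next
    case (Cons z t)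
    then show ?thesis using eq by (cases "z = p") (auto simp: h_def)
  qed
qed

lemma erase_lem:
  assumes R: "RCP1 \<Sigma> f" and d: "d \<in> \<Sigma>" and x: "x \<in> lists \<Sigma>"
    and bd: "b \<noteq> d" and fp: "f (filter (\<lambda>z. z \<noteq> d) x) = b # s"
  shows "\<exists>z t. f x = z # t \<and> (z = b \<or> z = d)"
proof -
  define h where "h = (\<lambda>z. if z = d then [] else [z :: 'a])"
  have hm: "is_morphism_on \<Sigma> h" unfolding is_morphism_on_def h_def by auto
  have "morph h x = morph h (filter (\<lambda>z. z \<noteq> d) x)"
    by (simp add: h_def morph_erase)
  moreover have "filter (\<lambda>z. z \<noteq> d) x \<in> lists \<Sigma>" using x by auto
  ultimately have "morph h (f x) = morph h (f (filter (\<lambda>z. z \<noteq> d) x))"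
    using x by (intro RCP1_app[OF R hm]) auto
  hence eq: "filter (\<lambda>z. z \<noteq> d) (f x) = b # filter (\<lambda>z. z \<noteq> d) s"
    using fp bd by (simp add: h_def morph_erase)
  show ?thesis
  proof (cases "f x")
    case Nil then show ?thesis using eq by simp
  next
    case (Cons z t)
    then show ?thesis using eq by (cases "z = d") auto
  qed
qed

lemma letter_lem:
  assumes R: "RCP1 \<Sigma> f" and a: "a \<in> \<Sigma>" and e: "e \<in> \<Sigma>"
    and ea: "e \<noteq> a" and eb: "e \<noteq> b" and ab: "a \<noteq> b" and fa: "f [a] = b # s"
  shows "\<exists>t. f [e] = b # t"
proof -
  define h where "h = (\<lambda>z. if z = a then [e] else [z])"
  have hm: "is_morphism_on \<Sigma> h" using e unfolding is_morphism_on_def h_def by auto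
  have "morph h [a] = morph h [e]" using ea by (simp add: h_def)
  hence "morph h (f [a]) = morph h (f [e])"
    using a e by (intro RCP1_app[OF R hm]) auto
  hence eq: "b # morph h s = morph h (f [e])" using fa ab by (simp add: h_def)
  show ?thesis
  proof (cases "f [e]")
    case Nil then show ?thesis using eq by simp
  next
    case (Cons z t)
    then show ?thesis using eq eb by (cases "z = a") (auto simp: h_def)
  qed
qed

theorem mainTheorem8:
  fixes \<Sigma> :: "'a set" and f :: "'a list \<Rightarrow> 'a list" and a b :: 'a
  assumes "finite \<Sigma>" and "card \<Sigma> \<ge> 3"
    and "\<forall>w\<in>lists \<Sigma>. f w \<in> lists \<Sigma>"
    and "RCP1 \<Sigma> f"
    and "a \<in> \<Sigma>" and "b \<in> \<Sigma>" and "a \<noteq> b"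
    and "\<exists>s. f [a] = b # s"
  shows "\<forall>x\<in>lists \<Sigma>. \<exists>s. f x = b # s"
proof -
  note R = assms(4)
  obtain s0 where fa: "f [a] = b # s0" using assms(8) by blast
  have "card (\<Sigma> - {a, b}) = card \<Sigma> - 2"
    using assms(1,5,6,7) by (simp add: card_Diff_subset)
  hence "card (\<Sigma> - {a, b}) \<ge> 1" using assms(2) by linarith
  hence "\<Sigma> - {a, b} \<noteq> {}" by (metis card.empty not_one_le_zero)
  then obtain c where c: "c \<in> \<Sigma>" "c \<noteq> a" "c \<noteq> b" by blast
  have letters: "\<exists>t. f [e] = b # t" if "e \<in> {a, c}" for e
    using that letter_lem[OF R assms(5) c(1) c(2) c(3) assms(7) fa] fa by auto
  have ne: "e \<in> \<Sigma>" "e \<noteq> b" if "e \<in> {a, c}" for e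
    using that c assms(5,7) by auto
  show ?thesis
  proof
    fix x assume "x \<in> lists \<Sigma>"
    then show "\<exists>s. f x = b # s"
    proof (induction "length x" arbitrary: x rule: less_induct)
      case less
      have Q: "\<exists>z t. f x = z # t \<and> (z = b \<or> z = e)" if e: "e \<in> {a, c}" for e
      proof (cases "e \<in> set x")
        case True
        have "length (filter (\<lambda>z. z \<noteq> e) x) < length x"
          using True by (simp add: length_filter_less)
        moreover have "filter (\<lambda>z. z \<noteq> e) x \<in> lists \<Sigma>" using less.prems by auto
        ultimately obtain s where "f (filter (\<lambda>z. z \<noteq> e) x) = b # s"
          using less.hyps by presburger
        from erase_lem[OF R ne(1)[OF e] less.prems _ this] ne(2)[OF e]
        show ?thesis by auto
      next
        case False
        obtain t where "f [e] = b # t" using letters[OF e] by blast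
        from subst_lem[OF R ne(1)[OF e] less.prems False _ this] ne(2)[OF e]
        show ?thesis by auto
      qed
      obtain z t where zt: "f x = z # t" "z = b \<or> z = a" using Q[of a] by auto
      obtain z' t' where "f x = z' # t'" "z' = b \<or> z' = c" using Q[of c] by auto
      then show ?case using zt c by auto
    qed
  qed
qed

end
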